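(* For all Maya diagrams $\sigma,\sigma'$, \[ \langle\sigma',A^{-1}(x;t)\sigma\rangle=\sum_{h}\prod_{i\in\mathbb{Z}}\Omega(h_{i-1},\sigma_i,h_i,\sigma'_i), \] where the sum runs over all row configurations $h$ from $\sigma$ to $\sigma'$ and the vertex weights are $\omega_1=\omega_3=\omega_5=1$, $\omega_2=-tx$, $\omega_4=x$, $\omega_6=(1-t)x$.
   Context: Maya diagrams are maps $\sigma:\mathbb{Z}\to\{0,1\}$ with $\sigma_i=1$ for $i\ll0$ and $\sigma_i=0$ for $i\gg0$. $\mathcal{F}(t)$ is the $\mathbb{C}(t)$-space with basis the Maya diagrams, with the bilinear form $\langle\cdot,\cdot\rangle$ making them orthonormal. Operators: $\psi^+_i(t)\sigma=(\sigma+\epsilon_i)\prod_{j>i}(-t)^{\sigma_j}$ if $\sigma_i=0$, else $0$; $\psi^-_i(t)\sigma=(\sigma-\epsilon_i)\prod_{j>i}(-t)^{-\sigma_j}$ if $\sigma_i=1$, else $0$; $E_{ij}(t)=(1-t)\psi_i^-(t)\psi_j^+(t)$; $A(x;t)=1+\sum_{r>0}\sum_{i_1<j_1<\cdots<i_r<j_r}(xt)^{j_1-i_1+\cdots+j_r-i_r}E_{i_1j_1}(t)\cdots E_{i_rj_r}(t)$, and $A^{-1}(x;t)$ is its inverse as a formal power series in $x$ with coefficients in $\operatorname{End}\mathcal{F}(t)$. Six-vertex row configurations: the allowed vertices (W,N,E,S) and weights are $\Omega(0,0,0,0)=\omega_1$, $\Omega(1,1,1,1)=\omega_2$, $\Omega(0,1,0,1)=\omega_3$,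 $\Omega(1,0,1,0)=\omega_4$, $\Omega(1,0,0,1)=\omega_5$, $\Omega(0,1,1,0)=\omega_6$, all other tuples having weight $0$. A row configuration from $\sigma$ (top) to $\sigma'$ (bottom) is $h:\mathbb{Z}\to\{0,1\}$ with $h_i=0$ for $|i|$ large and $(h_{i-1},\sigma_i,h_i,\sigma'_i)$ allowed for every $i$. *)

theory Defs
  imports "HOL-Library.Groups_Big_Fun"
          "HOL-Computational_Algebra.Formal_Power_Series"
          "HOL-Computational_Algebra.Fraction_Field"
          "HOL-Computational_Algebra.Polynomial"
begin

text \<open>Maya diagrams: maps Z -> {0,1}, encoded as int => bool (True = 1),
  equal to 1 far to the left and to 0 far to the right.\<close>
definition is_maya :: "(int \<Rightarrow> bool) \<Rightarrow> bool" where
  "is_maya \<sigma> \<longleftrightarrow> (\<exists>N::int. \<forall>i. (i \<le> - N \<longrightarrow> \<sigma> i) \<and> (N \<le> i \<longrightarrow> \<not> \<sigma> i))"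

text \<open>Vectors: coefficient functions on Maya diagrams (the coordinate at tau is
  the pairing with the basis vector tau). Basis vector of a diagram:\<close>
definition basis_vec :: "(int \<Rightarrow> bool) \<Rightarrow> (int \<Rightarrow> bool) \<Rightarrow> 'a::zero_neq_one" where
  "basis_vec \<sigma> = (\<lambda>\<tau>. if \<tau> = \<sigma> then 1 else 0)"

text \<open>Fermionic operators, as linear extensions of their action on the basis:
  the coefficient of tau in psi v is read off from the unique preimage of tau.
  For a Maya diagram the product over j>i of (-t)^(sigma_j) is (-t)^(number of
  j > i with sigma_j = 1).\<close>
definition psi_plus :: "'a::field \<Rightarrow> int \<Rightarrow> ((int \<Rightarrow> bool) \<Rightarrow> 'a) \<Rightarrow> ((int \<Rightarrow> bool) \<Rightarrow> 'a)" where
  "psi_plus t i v = (\<lambda>\<tau>. if \<tau> i then (- t) ^ card {j. i < j \<and> \<tau> j} * v (\<tau>(i := False)) else 0)"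

definition psi_minus :: "'a::field \<Rightarrow> int \<Rightarrow> ((int \<Rightarrow> bool) \<Rightarrow> 'a) \<Rightarrow> ((int \<Rightarrow> bool) \<Rightarrow> 'a)" where
  "psi_minus t i v = (\<lambda>\<tau>. if \<not> \<tau> i then inverse ((- t) ^ card {j. i < j \<and> \<tau> j}) * v (\<tau>(i := True)) else 0)"

definition E_op :: "'a::field \<Rightarrow> int \<Rightarrow> int \<Rightarrow> ((int \<Rightarrow> bool) \<Rightarrow> 'a) \<Rightarrow> ((int \<Rightarrow> bool) \<Rightarrow> 'a)" where
  "E_op t i j v = (\<lambda>\<tau>. (1 - t) * psi_minus t i (psi_plus t j v) \<tau>)"

definition E_prod :: "'a::field \<Rightarrow> (int \<times> int) list \<Rightarrow> ((int \<Rightarrow> bool) \<Rightarrow> 'a) \<Rightarrow> ((int \<Rightarrow> bool) \<Rightarrow> 'a)" where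
  "E_prod t ps v = foldr (\<lambda>(i, j) w. E_op t i j w) ps v"

definition chain_ok :: "(int \<times> int) list \<Rightarrow> bool" where
  "chain_ok ps \<longleftrightarrow> sorted_wrt (<) (concat (map (\<lambda>(i, j). [i, j]) ps))"

definition chain_deg :: "(int \<times> int) list \<Rightarrow> int" where
  "chain_deg ps = (\<Sum>(i, j)\<leftarrow>ps. j - i)"

definition A_coeff :: "'a::field \<Rightarrow> nat \<Rightarrow> ((int \<Rightarrow> bool) \<Rightarrow> 'a) \<Rightarrow> ((int \<Rightarrow> bool) \<Rightarrow> 'a)" where
  "A_coeff t n v = (\<lambda>\<tau>. Sum_any (\<lambda>ps. if chain_ok ps \<and> chain_deg ps = int n
        then t ^ n * E_prod t ps v \<tau> else 0))"

text \<open>Coefficients of A^{-1}(x;t): the inverse B of A in the formal power series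
  ring, determined by A B = 1, i.e. B_0 = 1 and B_n = - sum_{k<n} A_{n-k} B_k.\<close>
fun Ainv_coeff :: "'a::field \<Rightarrow> nat \<Rightarrow> ((int \<Rightarrow> bool) \<Rightarrow> 'a) \<Rightarrow> ((int \<Rightarrow> bool) \<Rightarrow> 'a)" where
  "Ainv_coeff t 0 v = v"
| "Ainv_coeff t (Suc n) v =
     (\<lambda>\<tau>. - (\<Sum>k<Suc n. A_coeff t (Suc n - k) (Ainv_coeff t k v) \<tau>))"

definition Ainv_matrix :: "'a::field \<Rightarrow> (int \<Rightarrow> bool) \<Rightarrow> (int \<Rightarrow> bool) \<Rightarrow> 'a fps" where
  "Ainv_matrix t \<sigma>' \<sigma> = Abs_fps (\<lambda>n. Ainv_coeff t n (basis_vec \<sigma>) \<sigma>')"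

definition Omega :: "'b \<Rightarrow> 'b \<Rightarrow> 'b \<Rightarrow> 'b \<Rightarrow> 'b \<Rightarrow> 'b \<Rightarrow> bool \<Rightarrow> bool \<Rightarrow> bool \<Rightarrow> bool \<Rightarrow> 'b::zero" where
  "Omega w1 w2 w3 w4 w5 w6 W N E S =
     (if (W, N, E, S) = (False, False, False, False) then w1
      else if (W, N, E, S) = (True, True, True, True) then w2
      else if (W, N, E, S) = (False, True, False, True) then w3
      else if (W, N, E, S) = (True, False, True, False) then w4
      else if (W, N, E, S) = (True, False, False, True) then w5
      else if (W, N, E, S) = (False, True, True, False) then w6
      else 0)"

definition allowed_vertex :: "bool \<Rightarrow> bool \<Rightarrow> bool \<Rightarrow> bool \<Rightarrow> bool" where
  "allowed_vertex W N E S \<longleftrightarrow> (W, N, E, S) \<in>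
     {(False, False, False, False), (True, True, True, True), (False, True, False, True),
      (True, False, True, False), (True, False, False, True), (False, True, True, False)}"

definition row_config :: "(int \<Rightarrow> bool) \<Rightarrow> (int \<Rightarrow> bool) \<Rightarrow> (int \<Rightarrow> bool) \<Rightarrow> bool" where
  "row_config \<sigma> \<sigma>' h \<longleftrightarrow> finite {i. h i} \<and>
     (\<forall>i. allowed_vertex (h (i - 1)) (\<sigma> i) (h i) (\<sigma>' i))"

definition t_var :: "complex poly fract" where
  "t_var = Fract [:0, 1:] 1"

definition Omega_cor :: "bool \<Rightarrow> bool \<Rightarrow> bool \<Rightarrow> bool \<Rightarrow> complex poly fract fps" where
  "Omega_cor = Omega 1 (- (fps_const t_var * fps_X)) 1 fps_X 1 (fps_const (1 - t_var) * fps_X)"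

end

theory Submission
  imports Defs
begin


definition FunS :: "int set \<Rightarrow> (int \<Rightarrow> bool) \<Rightarrow> (int \<Rightarrow> bool) set" where
  "FunS S \<beta> = {\<tau>. \<forall>k. k \<notin> S \<longrightarrow> \<tau> k = \<beta> k}"

lemma FunS_empty[simp]: "FunS {} \<beta> = {\<beta>}"
  by (auto simp: FunS_def)

lemma finite_FunS: assumes "finite S" shows "finite (FunS S \<beta>)"
proof -
  have "FunS S \<beta> \<subseteq> (\<lambda>A k. if k \<in> S then k \<in> A else \<beta> k) ` Pow S"
  proof
    fix \<tau> assume "\<tau> \<in> FunS S \<beta>"
    then have "\<tau> = (\<lambda>k. if k \<in> S then k \<in> {k\<in>S. \<tau> k} else \<beta> k)"
      by (auto simp: FunS_def)
    then show "\<tau> \<in> (\<lambda>A k. if k \<in> S then k \<in> A else \<beta> k) ` Pow S" by blast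
  qed
  then show ?thesis using assms by (meson finite_Pow_iff finite_imageI finite_subset)
qed

lemma FunS_insert:
  assumes "p \<notin> S"
  shows "FunS (insert p S) \<beta> = FunS S \<beta> \<union> FunS S (\<beta>(p := \<not> \<beta> p))"
  using assms by (auto simp: FunS_def)

lemma sum_FunS_insert:
  assumes "p \<notin> S" "finite S"
  shows "(\<Sum>\<tau>\<in>FunS (insert p S) \<beta>. F \<tau>) = (\<Sum>\<tau>\<in>FunS S \<beta>. F \<tau>) + (\<Sum>\<tau>\<in>FunS S (\<beta>(p := \<not> \<beta> p)). F \<tau>)"
proof -
  have "FunS S \<beta> \<inter> FunS S (\<beta>(p := \<not> \<beta> p)) = {}"
    using assms(1) by (auto simp: FunS_def)
  then show ?thesis unfolding FunS_insert[OF assms(1)]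
    by (intro sum.union_disjoint finite_FunS assms(2))
qed

lemma FunS_at: "\<tau> \<in> FunS S \<beta> \<Longrightarrow> k \<notin> S \<Longrightarrow> \<tau> k = \<beta> k"
  by (auto simp: FunS_def)

fun RW :: "(bool \<Rightarrow> bool \<Rightarrow> bool \<Rightarrow> bool \<Rightarrow> 'b::comm_semiring_1) \<Rightarrow> nat \<Rightarrow> int \<Rightarrow> bool \<Rightarrow> (int \<Rightarrow> bool) \<Rightarrow> (int \<Rightarrow> bool) \<Rightarrow> 'b" where
  "RW Om 0 p h tp bt = (if h then 0 else 1)"
| "RW Om (Suc n) p h tp bt = Om h (tp p) False (bt p) * RW Om n (p+1) False tp bt
                              + Om h (tp p) True (bt p) * RW Om n (p+1) True tp bt"

lemma RW_local:
  assumes "\<And>k. p \<le> k \<Longrightarrow> k < p + int n \<Longrightarrow> tp k = tp' k \<and> bt k = bt' k"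
  shows "RW Om n p h tp bt = RW Om n p h tp' bt'"
  using assms
proof (induction n arbitrary: p h)
  case 0 then show ?case by simp
next
  case (Suc n)
  have "RW Om n (p+1) e tp bt = RW Om n (p+1) e tp' bt'" for e
    using Suc.prems by (intro Suc.IH) auto
  moreover have "tp p = tp' p" "bt p = bt' p" using Suc.prems[of p] by auto
  ultimately show ?case by simp
qed

lemma RW_upd_top: "q < p \<Longrightarrow> RW Om n p h (tp(q:=c)) bt = RW Om n p h tp bt"
  by (rule RW_local) auto
lemma RW_upd_bot: "q < p \<Longrightarrow> RW Om n p h tp (bt(q:=c)) = RW Om n p h tp bt"
  by (rule RW_local) auto

definition OmT :: "'a::field \<Rightarrow> bool \<Rightarrow> bool \<Rightarrow> bool \<Rightarrow> bool \<Rightarrow> 'a fps" where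
  "OmT t = Omega 1 (- (fps_const t * fps_X)) 1 fps_X 1 (fps_const (1 - t) * fps_X)"
definition OmA :: "'a::field \<Rightarrow> bool \<Rightarrow> bool \<Rightarrow> bool \<Rightarrow> bool \<Rightarrow> 'a fps" where
  "OmA t = Omega 1 (- fps_X) 1 (fps_const t * fps_X) 1 (- (fps_const (1 - t) * fps_X))"

definition PP :: "'a::field \<Rightarrow> nat \<Rightarrow> int \<Rightarrow> bool \<Rightarrow> bool \<Rightarrow> (int \<Rightarrow> bool) \<Rightarrow> (int \<Rightarrow> bool) \<Rightarrow> 'a fps" where
  "PP t n p h g \<sigma> \<sigma>' = (\<Sum>\<tau>\<in>FunS {p..<p+int n} \<sigma>'. RW (OmT t) n p h \<sigma> \<tau> * RW (OmA t) n p g \<tau> \<sigma>')"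

lemma PP_0: "PP t 0 p h g \<sigma> \<sigma>' = (if h then 0 else 1) * (if g then 0 else 1)"
  by (simp add: PP_def)

lemma Ico_Suc: "{p..<p + int (Suc n)} = insert p {p+1..<(p+1) + int n}"
  by auto


lemma PP_Suc: "PP t (Suc n) p h g \<sigma> \<sigma>' =
   (\<Sum>c\<in>UNIV. \<Sum>e\<in>UNIV. \<Sum>f\<in>UNIV. OmT t h (\<sigma> p) e c * OmA t g c f (\<sigma>' p) * PP t n (p+1) e f \<sigma> \<sigma>')"
proof -
  let ?S = "{p+1..<(p+1) + int n}"
  have pS: "p \<notin> ?S" by auto
  have fS: "finite ?S" by auto
  define G where "G = (\<lambda>c \<tau>. \<Sum>e\<in>UNIV. \<Sum>f\<in>UNIV. OmT t h (\<sigma> p) e c * OmA t g c f (\<sigma>' p) *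
        (RW (OmT t) n (p+1) e \<sigma> \<tau> * RW (OmA t) n (p+1) f \<tau> \<sigma>'))"
  have step: "RW (OmT t) (Suc n) p h \<sigma> \<tau> * RW (OmA t) (Suc n) p g \<tau> \<sigma>' = G (\<tau> p) \<tau>" for \<tau>
  proof -
    have gen: "(a0*r0 + a1*r1)*(b0*s0+b1*s1) = a0*b0*(r0*s0) + a0*b1*(r0*s1) + a1*b0*(r1*s0) + a1*b1*(r1*s1)" for a0 a1 r0 r1 b0 b1 s0 s1 :: "'a fps"
      by (simp add: algebra_simps)
    show ?thesis unfolding G_def RW.simps gen by (simp add: UNIV_bool add.assoc)
  qed
  have "PP t (Suc n) p h g \<sigma> \<sigma>' = (\<Sum>\<tau>\<in>FunS ?S \<sigma>'. G (\<tau> p) \<tau>) + (\<Sum>\<tau>\<in>FunS ?S (\<sigma>'(p := \<not> \<sigma>' p)). G (\<tau> p) \<tau>)"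
    unfolding PP_def Ico_Suc sum_FunS_insert[OF pS fS] step ..
  also have "(\<Sum>\<tau>\<in>FunS ?S \<sigma>'. G (\<tau> p) \<tau>) = (\<Sum>\<tau>\<in>FunS ?S \<sigma>'. G (\<sigma>' p) \<tau>)"
    by (rule sum.cong) (auto simp: FunS_def)
  also have "(\<Sum>\<tau>\<in>FunS ?S (\<sigma>'(p := \<not> \<sigma>' p)). G (\<tau> p) \<tau>) = (\<Sum>\<tau>\<in>FunS ?S (\<sigma>'(p := \<not> \<sigma>' p)). G (\<not> \<sigma>' p) \<tau>)"
    by (rule sum.cong) (auto simp: FunS_def)
  also have "(\<Sum>\<tau>\<in>FunS ?S (\<sigma>'(p := \<not> \<sigma>' p)). G (\<not> \<sigma>' p) \<tau>) = (\<Sum>\<tau>\<in>FunS ?S \<sigma>'. G (\<not> \<sigma>' p) \<tau>)"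
  proof -
    have "FunS ?S (\<sigma>'(p := \<not> \<sigma>' p)) = (\<lambda>\<tau>. \<tau>(p := \<not> \<sigma>' p)) ` FunS ?S \<sigma>'"
    proof (rule set_eqI, rule iffI)
      fix \<tau> assume A: "\<tau> \<in> FunS ?S (\<sigma>'(p := \<not> \<sigma>' p))"
      have tp: "\<tau> p = (\<not> \<sigma>' p)" using FunS_at[OF A pS] by simp
      have m: "\<tau>(p := \<sigma>' p) \<in> FunS ?S \<sigma>'" using A by (auto simp: FunS_def)
      have e: "\<tau> = (\<tau>(p := \<sigma>' p))(p := \<not> \<sigma>' p)" using tp by (simp add: fun_eq_iff)
      show "\<tau> \<in> (\<lambda>\<tau>. \<tau>(p := \<not> \<sigma>' p)) ` FunS ?S \<sigma>'" using e by (intro image_eqI[OF _ m]) simp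
    qed (auto simp: FunS_def)
    moreover have "inj_on (\<lambda>\<tau>. \<tau>(p := \<not> \<sigma>' p)) (FunS ?S \<sigma>')"
    proof (rule inj_onI)
      fix x y assume x: "x \<in> FunS ?S \<sigma>'" and y: "y \<in> FunS ?S \<sigma>'" and xy: "x(p := \<not> \<sigma>' p) = y(p := \<not> \<sigma>' p)"
      have "x p = y p" using FunS_at[OF x pS] FunS_at[OF y pS] by simp
      moreover have "x k = y k" if "k \<noteq> p" for k using fun_cong[OF xy, of k] that by simp
      ultimately show "x = y" by (intro ext) metis
    qed
    moreover have "G c (\<tau>(p := d)) = G c \<tau>" for c d \<tau>
      unfolding G_def by (simp add: RW_upd_top RW_upd_bot)
    ultimately show ?thesis by (simp add: sum.reindex)
  qed
  also have "(\<Sum>\<tau>\<in>FunS ?S \<sigma>'. G (\<sigma>' p) \<tau>) + (\<Sum>\<tau>\<in>FunS ?S \<sigma>'. G (\<not> \<sigma>' p) \<tau>) = (\<Sum>\<tau>\<in>FunS ?S \<sigma>'. \<Sum>c\<in>UNIV. G c \<tau>)"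
    by (cases "\<sigma>' p") (simp_all add: UNIV_bool sum.distrib add.commute)
  also have "\<dots> = (\<Sum>c\<in>UNIV. \<Sum>e\<in>UNIV. \<Sum>f\<in>UNIV. OmT t h (\<sigma> p) e c * OmA t g c f (\<sigma>' p) * PP t n (p+1) e f \<sigma> \<sigma>')"
    unfolding G_def PP_def sum_distrib_left mult.assoc by (subst sum.swap, rule sum.cong, simp, subst sum.swap, rule sum.cong, simp, subst sum.swap, simp)
  finally show ?thesis .
qed


lemma fps_t_comb: "fps_X * (fps_const t * P) + fps_X * (fps_const (1 - t) * P) = fps_X * (P::'a::field fps)"
proof -
  have "fps_const t * P + fps_const (1 - t) * P = (fps_const t + fps_const (1 - t)) * P"
    by (simp only: distrib_right)
  also have "fps_const t + fps_const (1 - t) = 1" by simp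
  finally have "fps_const t * P + fps_const (1 - t) * P = P" by simp
  then show ?thesis by (metis distrib_left)
qed

lemma PP_main:
  "PP t n p False False \<sigma> \<sigma>' = (if \<forall>k\<in>{p..<p+int n}. \<sigma> k = \<sigma>' k then 1 else 0)
   \<and> PP t n p False True \<sigma> \<sigma>' = PP t n p True False \<sigma> \<sigma>'"
proof (induction n arbitrary: p)
  case 0
  then show ?case by (simp add: PP_0)
next
  case (Suc n)
  have IH0: "PP t n (1+p) False False \<sigma> \<sigma>' = (if \<forall>k\<in>{p+1..<p+1+int n}. \<sigma> k = \<sigma>' k then 1 else 0)"
   and IH1: "PP t n (1+p) False True \<sigma> \<sigma>' = PP t n (1+p) True False \<sigma> \<sigma>'"
    using Suc.IH[of "p+1"] by (auto simp: add.commute)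
  have eq: "(\<forall>k\<in>{p..<p+int(Suc n)}. \<sigma> k = \<sigma>' k) = (\<sigma> p = \<sigma>' p \<and> (\<forall>k\<in>{p+1..<p+1+int n}. \<sigma> k = \<sigma>' k))"
    unfolding Ico_Suc by auto
  show ?case unfolding PP_Suc eq
    by (cases "\<sigma> p"; cases "\<sigma>' p") (simp_all add: UNIV_bool OmT_def OmA_def Omega_def algebra_simps fps_t_comb IH0 IH1)
qed



lemma allowed_unique: "allowed_vertex W N E S \<Longrightarrow> allowed_vertex W N E' S \<Longrightarrow> E = E'"
  unfolding allowed_vertex_def by auto
lemma allowed_TT: "allowed_vertex W True E True \<Longrightarrow> W = E"
  unfolding allowed_vertex_def by auto
lemma allowed_FF: "allowed_vertex W False E False \<Longrightarrow> W = E"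
  unfolding allowed_vertex_def by auto
lemma allowed_triv: "allowed_vertex False True False True" "allowed_vertex False False False False"
  unfolding allowed_vertex_def by auto
lemma allowed_WE: "allowed_vertex False N False S \<Longrightarrow> N = S"
  unfolding allowed_vertex_def by auto
lemma Omega_nz: "Omega w1 w2 w3 w4 w5 w6 W N E S \<noteq> 0 \<Longrightarrow> allowed_vertex W N E S"
  unfolding allowed_vertex_def Omega_def by (auto split: if_splits)

lemma RW_h:
  fixes Om :: "bool \<Rightarrow> bool \<Rightarrow> bool \<Rightarrow> bool \<Rightarrow> 'b::comm_semiring_1"
  assumes Om: "\<And>W N E S. Om W N E S \<noteq> 0 \<Longrightarrow> allowed_vertex W N E S"
  assumes "\<forall>k. p \<le> k \<and> k < p + int n \<longrightarrow> allowed_vertex (h (k-1)) (\<sigma> k) (h k) (\<tau> k)"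
    and "\<not> h (p + int n - 1)"
  shows "RW Om n p (h (p-1)) \<sigma> \<tau> = (\<Prod>k\<in>{p..<p+int n}. Om (h (k-1)) (\<sigma> k) (h k) (\<tau> k))"
  using assms(2,3)
proof (induction n arbitrary: p)
  case 0
  then show ?case by simp
next
  case (Suc n)
  have al: "allowed_vertex (h (p-1)) (\<sigma> p) (h p) (\<tau> p)" using Suc.prems(1) by auto
  have IH: "RW Om n (p+1) (h p) \<sigma> \<tau> = (\<Prod>k\<in>{p+1..<p+1+int n}. Om (h (k-1)) (\<sigma> k) (h k) (\<tau> k))"
    using Suc.IH[of "p+1"] Suc.prems by auto
  have z: "Om (h (p-1)) (\<sigma> p) (\<not> h p) (\<tau> p) = 0"
    using Om allowed_unique[OF al] by (metis (full_types))
  have "RW Om (Suc n) p (h (p-1)) \<sigma> \<tau> = Om (h (p-1)) (\<sigma> p) (h p) (\<tau> p) * RW Om n (p+1) (h p) \<sigma> \<tau>"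
    using z by (cases "h p") simp_all
  also have "\<dots> = (\<Prod>k\<in>{p..<p+int (Suc n)}. Om (h (k-1)) (\<sigma> k) (h k) (\<tau> k))"
    unfolding IH Ico_Suc by (subst prod.insert) auto
  finally show ?case .
qed

lemma RW_nz:
  fixes Om :: "bool \<Rightarrow> bool \<Rightarrow> bool \<Rightarrow> bool \<Rightarrow> 'b::comm_semiring_1"
  assumes Om: "\<And>W N E S. Om W N E S \<noteq> 0 \<Longrightarrow> allowed_vertex W N E S"
  shows "RW Om n p hin \<sigma> \<tau> \<noteq> 0 \<Longrightarrow> \<exists>h. h (p-1) = hin \<and>
     (\<forall>k. p \<le> k \<and> k < p + int n \<longrightarrow> allowed_vertex (h (k-1)) (\<sigma> k) (h k) (\<tau> k)) \<and>
     \<not> h (p + int n - 1) \<and> (\<forall>k. h k \<longrightarrow> p - 1 \<le> k \<and> k < p + int n - 1)"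
proof (induction n arbitrary: p hin)
  case 0
  then have "\<not> hin" by (auto split: if_splits)
  then show ?case by (intro exI[of _ "\<lambda>_. False"]) auto
next
  case (Suc n)
  obtain e where e1: "Om hin (\<sigma> p) e (\<tau> p) \<noteq> 0" and e2: "RW Om n (p+1) e \<sigma> \<tau> \<noteq> 0"
  proof -
    have "Om hin (\<sigma> p) False (\<tau> p) * RW Om n (p+1) False \<sigma> \<tau> \<noteq> 0 \<or> Om hin (\<sigma> p) True (\<tau> p) * RW Om n (p+1) True \<sigma> \<tau> \<noteq> 0"
      using Suc.prems by auto
    then obtain e where "Om hin (\<sigma> p) e (\<tau> p) * RW Om n (p+1) e \<sigma> \<tau> \<noteq> 0" by blast
    then show ?thesis using that by (metis mult_zero_left mult_zero_right)
  qed
  obtain h' where h'1: "h' p = e"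
    and h'2: "\<forall>k. p + 1 \<le> k \<and> k < p + 1 + int n \<longrightarrow> allowed_vertex (h' (k-1)) (\<sigma> k) (h' k) (\<tau> k)"
    and h'3: "\<not> h' (p + 1 + int n - 1)" and h'4: "\<forall>k. h' k \<longrightarrow> p + 1 - 1 \<le> k \<and> k < p + 1 + int n - 1"
    using Suc.IH[OF e2] by auto
  define h where "h = h'(p - 1 := hin)"
  have "h (p-1) = hin" by (simp add: h_def)
  moreover have "\<forall>k. p \<le> k \<and> k < p + int (Suc n) \<longrightarrow> allowed_vertex (h (k-1)) (\<sigma> k) (h k) (\<tau> k)"
  proof (intro allI impI)
    fix k assume k: "p \<le> k \<and> k < p + int (Suc n)"
    show "allowed_vertex (h (k-1)) (\<sigma> k) (h k) (\<tau> k)"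
    proof (cases "k = p")
      case True
      then show ?thesis using Om[OF e1] h'1 by (simp add: h_def)
    next
      case False
      then have "p + 1 \<le> k \<and> k < p + 1 + int n" using k by auto
      then show ?thesis using h'2 by (auto simp: h_def)
    qed
  qed
  moreover have "\<not> h (p + int (Suc n) - 1)" using h'3 by (auto simp: h_def)
  moreover have "\<forall>k. h k \<longrightarrow> p - 1 \<le> k \<and> k < p + int (Suc n) - 1"
    using h'4 by (auto simp: h_def)
  ultimately show ?case by blast
qed

definition Std :: "int \<Rightarrow> int \<Rightarrow> (int \<Rightarrow> bool) \<Rightarrow> bool" where
  "Std a b \<sigma> \<longleftrightarrow> (\<forall>k<a. \<sigma> k) \<and> (\<forall>k\<ge>b. \<not> \<sigma> k)"

lemma finite_int_lower: "finite (U::int set) \<Longrightarrow> \<exists>K. \<forall>k\<le>K. k \<notin> U"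
proof (cases "U = {}")
  case True then show ?thesis by auto
next
  case False
  assume "finite U"
  then have "\<forall>u\<in>U. Min U \<le> u" by simp
  then show ?thesis by (intro exI[of _ "Min U - 1"]) force
qed

lemma rc_unique:
  assumes "row_config \<sigma> \<tau> h1" "row_config \<sigma> \<tau> h2"
  shows "h1 = h2"
proof -
  have "finite ({i. h1 i} \<union> {i. h2 i})" using assms by (auto simp: row_config_def)
  then obtain K where K0: "\<forall>k\<le>K. k \<notin> {i. h1 i} \<union> {i. h2 i}" using finite_int_lower by blast
  then have K: "\<forall>k\<le>K. \<not> h1 k \<and> \<not> h2 k" by simp
  have "h1 k = h2 k" for k
  proof (cases "k \<le> K")
    case True then show ?thesis using K by auto
  next
    case False
    then have "K \<le> k" by auto
    then show ?thesis
    proof (induction k rule: int_ge_induct)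
      case base then show ?case using K by auto
    next
      case (step i)
      have a1: "\<forall>i. allowed_vertex (h1 (i - 1)) (\<sigma> i) (h1 i) (\<tau> i)"
        and a2: "\<forall>i. allowed_vertex (h2 (i - 1)) (\<sigma> i) (h2 i) (\<tau> i)"
        using assms by (auto simp: row_config_def)
      have "allowed_vertex (h1 i) (\<sigma> (i+1)) (h1 (i+1)) (\<tau> (i+1))"
           "allowed_vertex (h2 i) (\<sigma> (i+1)) (h2 (i+1)) (\<tau> (i+1))"
        using a1[rule_format, of "i+1"] a2[rule_format, of "i+1"] by simp_all
      then show ?case using allowed_unique[of "h1 i" "\<sigma>(i+1)" "h1(i+1)" "\<tau>(i+1)" "h2(i+1)"] step.IH by simp
    qed
  qed
  then show ?thesis by auto
qed

lemma rc_zero: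
  assumes rc: "row_config \<sigma> \<tau> h" and S1: "Std a b \<sigma>" and S2: "Std a b \<tau>"
  shows "k < a \<Longrightarrow> \<not> h k" and "b - 1 \<le> k \<Longrightarrow> \<not> h k"
proof -
  have fin: "finite {i. h i}" and al: "\<And>i. allowed_vertex (h (i-1)) (\<sigma> i) (h i) (\<tau> i)"
    using rc by (auto simp: row_config_def)
  show "\<not> h k" if "k < a"
  proof
    assume hk: "h k"
    have "h (k - int m)" for m
    proof (induction m)
      case 0 then show ?case using hk by simp
    next
      case (Suc m)
      have "k - int m < a" using that by auto
      then have "allowed_vertex (h (k - int m - 1)) True (h (k - int m)) True"
        using al[of "k - int m"] S1 S2 by (auto simp: Std_def)
      then have "h (k - int m - 1) = h (k - int m)" by (rule allowed_TT)
      then show ?case using Suc by (simp add: algebra_simps)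
    qed
    then have "range (\<lambda>m::nat. k - int m) \<subseteq> {i. h i}" by auto
    moreover have "inj (\<lambda>m::nat. k - int m)" by (rule injI) auto
    ultimately show False using fin by (meson finite_imageD finite_subset infinite_UNIV_nat)
  qed
  show "\<not> h k" if "b - 1 \<le> k"
  proof
    assume hk: "h k"
    have "h (k + int m)" for m
    proof (induction m)
      case 0 then show ?case using hk by simp
    next
      case (Suc m)
      have "b \<le> k + int m + 1" using that by auto
      then have "allowed_vertex (h (k + int m + 1 - 1)) False (h (k + int m + 1)) False"
        using al[of "k + int m + 1"] S1 S2 by (auto simp: Std_def)
      then have "h (k + int m + 1 - 1) = h (k + int m + 1)" by (rule allowed_FF)
      then show ?case using Suc by (simp add: algebra_simps)
    qed
    then have "range (\<lambda>m::nat. k + int m) \<subseteq> {i. h i}" by auto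
    moreover have "inj (\<lambda>m::nat. k + int m)" by (rule injI) auto
    ultimately show False using fin by (meson finite_imageD finite_subset infinite_UNIV_nat)
  qed
qed

lemma Tf_RW:
  fixes Om :: "bool \<Rightarrow> bool \<Rightarrow> bool \<Rightarrow> bool \<Rightarrow> 'b::comm_semiring_1"
  assumes Om: "\<And>W N E S. Om W N E S \<noteq> 0 \<Longrightarrow> allowed_vertex W N E S"
    and Om1: "Om False True False True = 1" "Om False False False False = 1"
    and S1: "Std a b \<sigma>" and S2: "Std a b \<tau>" and ab: "a \<le> b"
  shows "Sum_any (\<lambda>h. if row_config \<sigma> \<tau> h then Prod_any (\<lambda>i. Om (h (i - 1)) (\<sigma> i) (h i) (\<tau> i)) else 0)
         = RW Om (nat (b - a)) a False \<sigma> \<tau>"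
proof (cases "\<exists>h0. row_config \<sigma> \<tau> h0")
  case True
  then obtain h0 where rc: "row_config \<sigma> \<tau> h0" by blast
  have z1: "k < a \<Longrightarrow> \<not> h0 k" and z2: "b - 1 \<le> k \<Longrightarrow> \<not> h0 k" for k
    using rc_zero[OF rc S1 S2] by auto
  have "Sum_any (\<lambda>h. if row_config \<sigma> \<tau> h then Prod_any (\<lambda>i. Om (h (i - 1)) (\<sigma> i) (h i) (\<tau> i)) else 0)
      = (\<Sum>h\<in>{h0}. if row_config \<sigma> \<tau> h then Prod_any (\<lambda>i. Om (h (i - 1)) (\<sigma> i) (h i) (\<tau> i)) else 0)"
    by (rule Sum_any.expand_superset) (use rc_unique[OF rc] in auto)
  also have "\<dots> = Prod_any (\<lambda>i. Om (h0 (i - 1)) (\<sigma> i) (h0 i) (\<tau> i))" using rc by simp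
  also have "\<dots> = (\<Prod>i\<in>{a..<b}. Om (h0 (i - 1)) (\<sigma> i) (h0 i) (\<tau> i))"
  proof (rule Prod_any.expand_superset)
    show "{i. Om (h0 (i - 1)) (\<sigma> i) (h0 i) (\<tau> i) \<noteq> 1} \<subseteq> {a..<b}"
    proof
      fix i assume i: "i \<in> {i. Om (h0 (i - 1)) (\<sigma> i) (h0 i) (\<tau> i) \<noteq> 1}"
      show "i \<in> {a..<b}"
      proof (rule ccontr)
        assume "i \<notin> {a..<b}"
        then consider "i < a" | "b \<le> i" by auto
        then show False
        proof cases
          case 1 then show False using i z1[of i] z1[of "i-1"] S1 S2 Om1 by (auto simp: Std_def)
        next
          case 2 then show False using i z2[of i] z2[of "i-1"] S1 S2 Om1 by (auto simp: Std_def)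
        qed
      qed
    qed
  qed simp
  also have "\<dots> = RW Om (nat (b - a)) a (h0 (a - 1)) \<sigma> \<tau>"
    using ab rc z2[of "b-1"] by (subst RW_h[OF Om]) (auto simp: row_config_def)
  also have "h0 (a - 1) = False" using z1[of "a-1"] by simp
  finally show ?thesis .
next
  case False
  have "RW Om (nat (b - a)) a False \<sigma> \<tau> = 0"
  proof (rule ccontr)
    assume "RW Om (nat (b - a)) a False \<sigma> \<tau> \<noteq> 0"
    from RW_nz[OF Om this] obtain h where h1: "h (a-1) = False"
      and h2: "\<forall>k. a \<le> k \<and> k < b \<longrightarrow> allowed_vertex (h (k-1)) (\<sigma> k) (h k) (\<tau> k)"
      and h3: "\<forall>k. h k \<longrightarrow> a - 1 \<le> k \<and> k < b - 1"
      using ab by auto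
    have "row_config \<sigma> \<tau> h"
      unfolding row_config_def
    proof (intro conjI allI)
      show "finite {i. h i}" by (rule finite_subset[of _ "{a-1..<b-1}"]) (use h3 in auto)
      fix i
      show "allowed_vertex (h (i - 1)) (\<sigma> i) (h i) (\<tau> i)"
      proof (cases "a \<le> i \<and> i < b")
        case True then show ?thesis using h2 by auto
      next
        case False
        then consider "i < a" | "b \<le> i" by auto
        then show ?thesis
        proof cases
          case 1
          have "\<not> h (i-1)" using h3 1 by force
          moreover have "\<not> h i" using h1 h3 1 by (cases "i = a - 1") auto
          ultimately show ?thesis using 1 S1 S2 allowed_triv by (auto simp: Std_def)
        next
          case 2
          have "\<not> h (i-1)" "\<not> h i" using h3 2 by force+
          then show ?thesis using 2 S1 S2 allowed_triv by (auto simp: Std_def)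
        qed
      qed
    qed
    then show False using False by blast
  qed
  then show ?thesis using False by simp
qed



definition cnt :: "int \<Rightarrow> (int \<Rightarrow> bool) \<Rightarrow> nat" where
  "cnt i \<tau> = card {j. i < j \<and> \<tau> j}"

fun valid :: "(int \<times> int) list \<Rightarrow> (int \<Rightarrow> bool) \<Rightarrow> bool" where
  "valid [] \<tau> = True"
| "valid ((i, j) # r) \<tau> = (\<not> \<tau> i \<and> \<tau> j \<and> valid r (\<tau>(i := True, j := False)))"

fun unmove :: "(int \<times> int) list \<Rightarrow> (int \<Rightarrow> bool) \<Rightarrow> (int \<Rightarrow> bool)" where
  "unmove [] \<tau> = \<tau>"
| "unmove ((i, j) # r) \<tau> = unmove r (\<tau>(i := True, j := False))"

fun coef :: "'a::field \<Rightarrow> (int \<times> int) list \<Rightarrow> (int \<Rightarrow> bool) \<Rightarrow> 'a" where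
  "coef t [] \<tau> = 1"
| "coef t ((i, j) # r) \<tau> = (1 - t) * inverse ((- t) ^ cnt i \<tau>) * (- t) ^ cnt j \<tau> * coef t r (\<tau>(i := True, j := False))"

fun dg :: "(int \<times> int) list \<Rightarrow> nat" where
  "dg [] = 0"
| "dg ((i, j) # r) = nat (j - i) + dg r"

lemma E_op_eq:
  assumes "i < j"
  shows "E_op t i j w \<tau> = (if \<not> \<tau> i \<and> \<tau> j then (1 - t) * inverse ((- t) ^ cnt i \<tau>) * (- t) ^ cnt j \<tau> * w (\<tau>(i := True, j := False)) else 0)"
proof -
  have c: "{k. j < k \<and> (\<tau>(i := True)) k} = {k. j < k \<and> \<tau> k}" using assms by auto
  show ?thesis using assms unfolding E_op_def psi_minus_def psi_plus_def cnt_def c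
    by (auto simp: c)
qed

lemma E_prod_Cons: "E_prod t ((i, j) # r) v = E_op t i j (E_prod t r v)"
  by (simp add: E_prod_def)

lemma E_prod_eq:
  "(\<forall>(i, j)\<in>set ps. i < j) \<Longrightarrow> E_prod t ps v \<tau> = (if valid ps \<tau> then coef t ps \<tau> * v (unmove ps \<tau>) else 0)"
proof (induction ps arbitrary: \<tau>)
  case Nil then show ?case by (simp add: E_prod_def)
next
  case (Cons a r)
  obtain i j where a: "a = (i, j)" by force
  have ij: "i < j" and r: "\<forall>(i, j)\<in>set r. i < j" using Cons.prems a by auto
  show ?case unfolding a E_prod_Cons E_op_eq[OF ij] using Cons.IH[OF r] by (cases "\<not> \<tau> i \<and> \<tau> j") (simp_all add: mult.assoc del: fun_upd_apply)
qed

lemma chain_ok_Nil[simp]: "chain_ok []" by (simp add: chain_ok_def)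

lemma set_concat_pairs: "set (concat (map (\<lambda>(i, j). [i, j]) r)) = (\<Union>(i, j)\<in>set r. {i, j})"
  by (induction r) auto

lemma chain_ok_Cons:
  "chain_ok ((i, j) # r) \<longleftrightarrow> i < j \<and> (\<forall>(i', j')\<in>set r. j < i' \<and> j < j') \<and> chain_ok r"
  unfolding chain_ok_def by (auto simp: set_concat_pairs)

lemma chain_lt: "chain_ok ps \<Longrightarrow> \<forall>(i, j)\<in>set ps. i < j"
proof (induction ps)
  case Nil then show ?case by simp
next
  case (Cons a r) then show ?case by (cases a) (auto simp: chain_ok_Cons)
qed

lemma chain_distinct: "chain_ok ps \<Longrightarrow> distinct ps"
proof (induction ps)
  case Nil then show ?case by simp
next
  case (Cons a r) then show ?case by (cases a) (auto simp: chain_ok_Cons)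
qed

lemma chain_deg_dg: "chain_ok ps \<Longrightarrow> chain_deg ps = int (dg ps)"
proof (induction ps)
  case Nil then show ?case by (simp add: chain_deg_def)
next
  case (Cons a r) then show ?case by (cases a) (auto simp: chain_ok_Cons chain_deg_def)
qed

lemma chain_upper:
  "chain_ok ps \<Longrightarrow> valid ps \<tau> \<Longrightarrow> \<forall>k\<ge>b. \<not> \<tau> k \<Longrightarrow> \<forall>(i, j)\<in>set ps. j < b"
proof (induction ps arbitrary: \<tau>)
  case Nil then show ?case by simp
next
  case (Cons a r)
  obtain i j where a: "a = (i, j)" by force
  have "j < b" using Cons.prems a by (auto simp: not_le[symmetric])
  moreover have "i < j" using Cons.prems a by (auto simp: chain_ok_Cons)
  moreover have c1: "chain_ok r" and c2: "valid r (\<tau>(i := True, j := False))" using Cons.prems a by (auto simp: chain_ok_Cons simp del: fun_upd_apply)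
  ultimately have c3: "\<forall>k\<ge>b. \<not> (\<tau>(i := True, j := False)) k" using Cons.prems by auto
  have "\<forall>(i, j)\<in>set r. j < b" by (rule Cons.IH[OF c1 c2 c3])
  then show ?case using \<open>j < b\<close> a by auto
qed

lemma chain_lower:
  "chain_ok ps \<Longrightarrow> valid ps \<tau> \<Longrightarrow> \<forall>k<a. \<tau> k \<Longrightarrow> \<forall>(i, j)\<in>set ps. a \<le> i"
proof (induction ps arbitrary: \<tau>)
  case Nil then show ?case by simp
next
  case (Cons x r)
  obtain i j where a: "x = (i, j)" by force
  have "a \<le> i" using Cons.prems a by (auto simp: not_less[symmetric])
  moreover have "i < j" using Cons.prems a by (auto simp: chain_ok_Cons)
  moreover have c1: "chain_ok r" and c2: "valid r (\<tau>(i := True, j := False))" using Cons.prems a by (auto simp: chain_ok_Cons simp del: fun_upd_apply)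
  ultimately have c3: "\<forall>k<a. (\<tau>(i := True, j := False)) k" using Cons.prems by auto
  have "\<forall>(i, j)\<in>set r. a \<le> i" by (rule Cons.IH[OF c1 c2 c3])
  then show ?case using \<open>a \<le> i\<close> a by auto
qed

lemma unmove_other: "(\<forall>(i, j)\<in>set ps. k \<noteq> i \<and> k \<noteq> j) \<Longrightarrow> unmove ps \<tau> k = \<tau> k"
proof (induction ps arbitrary: \<tau>)
  case Nil then show ?case by simp
next
  case (Cons a r) then show ?case by (cases a) auto
qed

definition chw :: "int \<Rightarrow> (int \<Rightarrow> bool) \<Rightarrow> (int \<times> int) list set" where
  "chw p \<sigma>' = {ps. chain_ok ps \<and> valid ps \<sigma>' \<and> (\<forall>(i, j)\<in>set ps. p \<le> i)}"

lemma finite_chw: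
  assumes "\<forall>k\<ge>b. \<not> \<sigma>' k"
  shows "finite (chw p \<sigma>')"
proof -
  have "chw p \<sigma>' \<subseteq> {xs. set xs \<subseteq> {p..<b} \<times> {p..<b} \<and> distinct xs}"
  proof
    fix ps assume "ps \<in> chw p \<sigma>'"
    then have c: "chain_ok ps" "valid ps \<sigma>'" "\<forall>(i, j)\<in>set ps. p \<le> i" by (auto simp: chw_def)
    have "\<forall>(i, j)\<in>set ps. j < b" by (rule chain_upper[OF c(1,2) assms])
    then show "ps \<in> {xs. set xs \<subseteq> {p..<b} \<times> {p..<b} \<and> distinct xs}"
      using c chain_lt[OF c(1)] chain_distinct[OF c(1)] by fastforce
  qed
  then show ?thesis by (rule finite_subset) (intro finite_subset_distinct finite_cartesian_product; simp)
qed

definition Wc :: "'a::field \<Rightarrow> (int \<times> int) list \<Rightarrow> (int \<Rightarrow> bool) \<Rightarrow> 'a fps" where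
  "Wc t ps \<tau> = fps_const (t ^ dg ps * coef t ps \<tau>) * fps_X ^ dg ps"

definition w1 :: "'a::field \<Rightarrow> int \<Rightarrow> int \<Rightarrow> (int \<Rightarrow> bool) \<Rightarrow> 'a" where
  "w1 t i j \<tau> = t ^ nat (j - i) * ((1 - t) * inverse ((- t) ^ cnt i \<tau>) * (- t) ^ cnt j \<tau>)"

lemma Wc_Cons: "Wc t ((i, j) # r) \<tau> = fps_const (w1 t i j \<tau>) * fps_X ^ nat (j - i) * Wc t r (\<tau>(i := True, j := False))"
  unfolding Wc_def w1_def by (simp add: power_add mult_ac flip: fps_const_mult)

lemma cnt_step:
  assumes "\<forall>k\<ge>b. \<not> \<tau> k"
  shows "cnt p \<tau> = cnt (p+1) \<tau> + (if \<tau> (p+1) then 1 else 0)"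
proof -
  have fin: "finite {j. p + 1 < j \<and> \<tau> j}"
    by (rule finite_subset[of _ "{p+1..<b}"]) (use assms in \<open>auto simp: not_le[symmetric]\<close>)
  show ?thesis
  proof (cases "\<tau> (p+1)")
    case True
    then have "{j. p < j \<and> \<tau> j} = insert (p+1) {j. p + 1 < j \<and> \<tau> j}" by auto
    then show ?thesis using True fin by (simp add: cnt_def)
  next
    case False
    then have "{j. p < j \<and> \<tau> j} = {j. p + 1 < j \<and> \<tau> j}" by (auto, smt (verit))
    then show ?thesis using False by (simp add: cnt_def)
  qed
qed

lemma w1_formula:
  assumes t: "t \<noteq> 0" and b: "\<forall>k\<ge>b. \<not> \<tau> k" and j: "\<tau> j"
  shows "p < j \<Longrightarrow> w1 t p j \<tau> = - (1 - t) * (\<Prod>k\<in>{p+1..<j}. if \<tau> k then -1 else t)"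
proof (induction "nat (j - p - 1)" arbitrary: p)
  case 0
  then have jp: "j = p + 1" by auto
  have "cnt p \<tau> = cnt j \<tau> + 1" using cnt_step[OF b, of p] j jp by simp
  then show ?case using jp t by (simp add: w1_def field_simps)
next
  case (Suc d)
  then have pj: "p + 1 < j" by auto
  have IH: "w1 t (p+1) j \<tau> = - (1 - t) * (\<Prod>k\<in>{p+2..<j}. if \<tau> k then -1 else t)"
    using Suc.hyps(1)[of "p+1"] Suc.hyps(2) pj by (simp add: add.assoc)
  have n: "nat (j - p) = Suc (nat (j - (p + 1)))" using pj by auto
  have c: "cnt p \<tau> = cnt (p+1) \<tau> + (if \<tau> (p+1) then 1 else 0)" by (rule cnt_step[OF b])
  have "w1 t p j \<tau> = (if \<tau> (p+1) then -1 else t) * w1 t (p+1) j \<tau>"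
    unfolding w1_def n c using t by (cases "\<tau> (p+1)") (simp_all add: field_simps)
  also have "\<dots> = - (1 - t) * (\<Prod>k\<in>{p+1..<j}. if \<tau> k then -1 else t)"
  proof -
    have "{p+1..<j} = insert (p+1) {p+2..<j}" using pj by auto
    then have "(\<Prod>k\<in>{p+1..<j}. if \<tau> k then -1 else t) = (if \<tau> (p+1) then -1 else t) * (\<Prod>k\<in>{p+2..<j}. if \<tau> k then -1 else t)"
      by simp
    then show ?thesis unfolding IH by (simp add: mult_ac)
  qed
  finally show ?case .
qed



definition CSet :: "'a::field \<Rightarrow> int \<Rightarrow> (int \<Rightarrow> bool) \<Rightarrow> ((int \<Rightarrow> bool) \<Rightarrow> 'a fps) \<Rightarrow> 'a fps" where
  "CSet t p \<sigma>' f = (\<Sum>ps\<in>chw p \<sigma>'. Wc t ps \<sigma>' * f (unmove ps \<sigma>'))"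

definition PWs :: "'a::field \<Rightarrow> int \<Rightarrow> int \<Rightarrow> (int \<Rightarrow> bool) \<Rightarrow> 'a" where
  "PWs t p j \<sigma>' = (\<Prod>k\<in>{p..<j}. if \<sigma>' k then -1 else t)"

definition OC :: "'a::field \<Rightarrow> int \<Rightarrow> int \<Rightarrow> (int \<Rightarrow> bool) \<Rightarrow> ((int \<Rightarrow> bool) \<Rightarrow> 'a fps) \<Rightarrow> 'a fps" where
  "OC t b p \<sigma>' f = (\<Sum>j\<in>{p..<b}. if \<sigma>' j then fps_const (PWs t p j \<sigma>') * fps_X ^ nat (j - p) * CSet t (j+1) (\<sigma>'(j := False)) f else 0)"

definition TS0 :: "'a::field \<Rightarrow> nat \<Rightarrow> int \<Rightarrow> (int \<Rightarrow> bool) \<Rightarrow> ((int \<Rightarrow> bool) \<Rightarrow> 'a fps) \<Rightarrow> 'a fps" where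
  "TS0 t n p \<sigma>' f = (\<Sum>\<tau>\<in>FunS {p..<p+int n} \<sigma>'. RW (OmA t) n p False \<tau> \<sigma>' * f \<tau>)"
definition TS1 :: "'a::field \<Rightarrow> nat \<Rightarrow> int \<Rightarrow> (int \<Rightarrow> bool) \<Rightarrow> ((int \<Rightarrow> bool) \<Rightarrow> 'a fps) \<Rightarrow> 'a fps" where
  "TS1 t n p \<sigma>' f = (\<Sum>\<tau>\<in>FunS {p..<p+int n} \<sigma>'. RW (OmA t) n p True \<tau> \<sigma>' * f \<tau>)"

definition pass :: "'a::field \<Rightarrow> bool \<Rightarrow> 'a fps" where
  "pass t s = fps_const (if s then -1 else t) * fps_X"

lemma fps_const_m1: "fps_const (-1 :: 'a::field) = -1"
  by (simp add: fps_eq_iff)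

lemma TS_0: "TS0 t 0 p \<sigma>' f = f \<sigma>'" "TS1 t 0 p \<sigma>' f = 0"
  by (simp_all add: TS0_def TS1_def)

lemma TS_split:
  fixes g :: bool and p :: int and n :: nat
  defines "S \<equiv> {p+1..<(p+1) + int n}"
  shows "(\<Sum>\<tau>\<in>FunS {p..<p+int (Suc n)} \<sigma>'. RW (OmA t) (Suc n) p g \<tau> \<sigma>' * f \<tau>) =
    (\<Sum>\<tau>\<in>FunS S \<sigma>'. (OmA t g (\<sigma>' p) False (\<sigma>' p) * RW (OmA t) n (p+1) False \<tau> \<sigma>'
                     + OmA t g (\<sigma>' p) True (\<sigma>' p) * RW (OmA t) n (p+1) True \<tau> \<sigma>') * f \<tau>)
  + (\<Sum>\<tau>\<in>FunS S (\<sigma>'(p := \<not> \<sigma>' p)). (OmA t g (\<not> \<sigma>' p) False (\<sigma>' p) * RW (OmA t) n (p+1) False \<tau> (\<sigma>'(p := \<not> \<sigma>' p))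
                     + OmA t g (\<not> \<sigma>' p) True (\<sigma>' p) * RW (OmA t) n (p+1) True \<tau> (\<sigma>'(p := \<not> \<sigma>' p))) * f \<tau>)"
proof -
  have pS: "p \<notin> S" and fS: "finite S" by (auto simp: S_def)
  show ?thesis unfolding Ico_Suc S_def[symmetric] sum_FunS_insert[OF pS fS]
  proof (intro arg_cong2[where f="(+)"] sum.cong refl)
    fix \<tau> assume "\<tau> \<in> FunS S \<sigma>'"
    then have "\<tau> p = \<sigma>' p" using FunS_at pS by blast
    then show "RW (OmA t) (Suc n) p g \<tau> \<sigma>' * f \<tau> = (OmA t g (\<sigma>' p) False (\<sigma>' p) * RW (OmA t) n (p+1) False \<tau> \<sigma>'
                     + OmA t g (\<sigma>' p) True (\<sigma>' p) * RW (OmA t) n (p+1) True \<tau> \<sigma>') * f \<tau>" by simp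
  next
    fix \<tau> assume "\<tau> \<in> FunS S (\<sigma>'(p := \<not> \<sigma>' p))"
    then have "\<tau> p = (\<not> \<sigma>' p)" using FunS_at pS by fastforce
    then show "RW (OmA t) (Suc n) p g \<tau> \<sigma>' * f \<tau> = (OmA t g (\<not> \<sigma>' p) False (\<sigma>' p) * RW (OmA t) n (p+1) False \<tau> (\<sigma>'(p := \<not> \<sigma>' p))
                     + OmA t g (\<not> \<sigma>' p) True (\<sigma>' p) * RW (OmA t) n (p+1) True \<tau> (\<sigma>'(p := \<not> \<sigma>' p))) * f \<tau>"
      by (simp add: RW_upd_bot)
  qed
qed

lemma TS0_Suc: "TS0 t (Suc n) p \<sigma>' f = TS0 t n (p+1) \<sigma>' f
   + (if \<not> \<sigma>' p then - (fps_const (1 - t) * fps_X) * TS1 t n (p+1) (\<sigma>'(p := True)) f else 0)"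
  unfolding TS0_def TS1_def TS_split
  by (cases "\<sigma>' p") (simp_all add: OmA_def Omega_def sum_distrib_left mult.assoc)

lemma TS1_Suc: "TS1 t (Suc n) p \<sigma>' f = pass t (\<sigma>' p) * TS1 t n (p+1) \<sigma>' f
   + (if \<sigma>' p then TS0 t n (p+1) (\<sigma>'(p := False)) f else 0)"
  unfolding TS0_def TS1_def TS_split
  by (cases "\<sigma>' p") (simp_all add: OmA_def Omega_def pass_def fps_const_m1 sum_distrib_left mult.assoc)



lemma chw_split:
  assumes b: "\<forall>k\<ge>b. \<not> \<sigma>' k"
  shows "chw p \<sigma>' = chw (p+1) \<sigma>' \<union> (if \<not> \<sigma>' p then (\<lambda>(j, r). (p, j) # r) ` (SIGMA j:{j\<in>{p+1..<b}. \<sigma>' j}. chw (j+1) (\<sigma>'(p := True, j := False))) else {})"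
    (is "?L = ?R")
proof
  show "?L \<subseteq> ?R"
  proof
    fix ps assume ps: "ps \<in> ?L"
    then have c: "chain_ok ps" "valid ps \<sigma>'" "\<forall>(i, j)\<in>set ps. p \<le> i" by (auto simp: chw_def)
    show "ps \<in> ?R"
    proof (cases ps)
      case Nil then show ?thesis by (simp add: chw_def)
    next
      case (Cons a r)
      obtain i j where a: "a = (i, j)" by force
      have co: "i < j" "\<forall>(i', j')\<in>set r. j < i' \<and> j < j'" "chain_ok r"
        using c(1) Cons a by (auto simp: chain_ok_Cons)
      have va: "\<not> \<sigma>' i" "\<sigma>' j" "valid r (\<sigma>'(i := True, j := False))"
        using c(2) Cons a by (auto simp del: fun_upd_apply)
      have jb: "j < b" using chain_upper[OF c(1,2) b] Cons a by auto
      show ?thesis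
      proof (cases "i = p")
        case True
        have "r \<in> chw (j+1) (\<sigma>'(p := True, j := False))"
          using co va True by (auto simp: chw_def)
        moreover have "j \<in> {j\<in>{p+1..<b}. \<sigma>' j}" using co va jb True by auto
        ultimately have "ps \<in> (\<lambda>(j, r). (p, j) # r) ` (SIGMA j:{j\<in>{p+1..<b}. \<sigma>' j}. chw (j+1) (\<sigma>'(p := True, j := False)))"
          using Cons a True by force
        then show ?thesis using va True by simp
      next
        case False
        then have "p + 1 \<le> i" using c(3) Cons a by auto
        then have "\<forall>(i', j')\<in>set ps. p + 1 \<le> i'" using co Cons a by fastforce
        then show ?thesis using c by (simp add: chw_def)
      qed
    qed
  qed
next
  show "?R \<subseteq> ?L"
  proof
    fix ps assume "ps \<in> ?R"
    then consider "ps \<in> chw (p+1) \<sigma>'"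
      | j r where "\<not> \<sigma>' p" "j \<in> {p+1..<b}" "\<sigma>' j" "r \<in> chw (j+1) (\<sigma>'(p := True, j := False))" "ps = (p, j) # r"
      by (auto split: if_splits)
    then show "ps \<in> ?L"
    proof cases
      case 1 then show ?thesis by (auto simp: chw_def)
    next
      case 2
      have r: "chain_ok r" "valid r (\<sigma>'(p := True, j := False))" "\<forall>(i, j')\<in>set r. j + 1 \<le> i"
        using 2(4) by (auto simp: chw_def)
      have "\<forall>(i', j')\<in>set r. j < i' \<and> j < j'" using r(3) chain_lt[OF r(1)] by fastforce
      then have "chain_ok ps" using 2 r by (simp add: chain_ok_Cons)
      moreover have "valid ps \<sigma>'" using 2 r by (simp del: fun_upd_apply)
      moreover have "\<forall>(i, j)\<in>set ps. p \<le> i" using 2 r(3) by fastforce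
      ultimately show ?thesis by (simp add: chw_def)
    qed
  qed
qed

lemma CSet_split:
  assumes b: "\<forall>k\<ge>b. \<not> \<sigma>' k" and t: "t \<noteq> 0"
  shows "CSet t p \<sigma>' f = CSet t (p+1) \<sigma>' f
     + (if \<not> \<sigma>' p then - (fps_const (1 - t) * fps_X) * OC t b (p+1) (\<sigma>'(p := True)) f else 0)"
proof -
  let ?J = "{j\<in>{p+1..<b}. \<sigma>' j}"
  let ?B = "\<lambda>j. chw (j+1) (\<sigma>'(p := True, j := False))"
  let ?G = "\<lambda>ps. Wc t ps \<sigma>' * f (unmove ps \<sigma>')"
  have fin1: "finite (chw (p+1) \<sigma>')" by (rule finite_chw[OF b])
  have finB: "finite (?B j)" if "j \<in> ?J" for j
    by (rule finite_chw[of b]) (use b that in auto)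
  have finJ: "finite ?J" by (rule finite_subset[of _ "{p+1..<b}"]) auto
  have finS: "finite (SIGMA j:?J. ?B j)" using finB finJ by (intro finite_SigmaI) auto
  have disj: "chw (p+1) \<sigma>' \<inter> (\<lambda>(j, r). (p, j) # r) ` (SIGMA j:?J. ?B j) = {}"
    by (auto simp: chw_def)
  have inj: "inj_on (\<lambda>(j, r). (p, j) # r) (SIGMA j:?J. ?B j)" by (auto simp: inj_on_def)
  have sumC2: "(\<Sum>ps\<in>(\<lambda>(j, r). (p, j) # r) ` (SIGMA j:?J. ?B j). ?G ps)
      = - (fps_const (1 - t) * fps_X) * OC t b (p+1) (\<sigma>'(p := True)) f"
  proof -
    have "(\<Sum>ps\<in>(\<lambda>(j, r). (p, j) # r) ` (SIGMA j:?J. ?B j). ?G ps) = (\<Sum>(j, r)\<in>(SIGMA j:?J. ?B j). ?G ((p, j) # r))"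
      by (subst sum.reindex[OF inj]) (simp add: case_prod_unfold)
    also have "\<dots> = (\<Sum>j\<in>?J. \<Sum>r\<in>?B j. ?G ((p, j) # r))"
      by (rule sum.Sigma[symmetric]) (use finB finJ in auto)
    also have "\<dots> = (\<Sum>j\<in>?J. fps_const (w1 t p j \<sigma>') * fps_X ^ nat (j - p) * CSet t (j+1) (\<sigma>'(p := True, j := False)) f)"
      unfolding CSet_def Wc_Cons unmove.simps by (simp add: sum_distrib_left mult.assoc)
    also have "\<dots> = (\<Sum>j\<in>?J. - (fps_const (1 - t) * fps_X) * (fps_const (PWs t (p+1) j \<sigma>') * fps_X ^ nat (j - (p+1)) * CSet t (j+1) (\<sigma>'(p := True, j := False)) f))"
    proof (rule sum.cong[OF refl])
      fix j assume j: "j \<in> ?J"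
      have w: "w1 t p j \<sigma>' = - (1 - t) * PWs t (p+1) j \<sigma>'"
        unfolding PWs_def using j by (intro w1_formula[OF t b]) auto
      have n: "nat (j - p) = Suc (nat (j - (p+1)))" using j by auto
      have m: "fps_const (t - 1) = - fps_const (1 - t)" by (metis fps_const_neg minus_diff_eq)
      show "fps_const (w1 t p j \<sigma>') * fps_X ^ nat (j - p) * CSet t (j+1) (\<sigma>'(p := True, j := False)) f =
         - (fps_const (1 - t) * fps_X) * (fps_const (PWs t (p+1) j \<sigma>') * fps_X ^ nat (j - (p+1)) * CSet t (j+1) (\<sigma>'(p := True, j := False)) f)"
        unfolding w n by (simp add: mult_ac m flip: fps_const_mult fps_const_neg)
    qed
    also have "\<dots> = - (fps_const (1 - t) * fps_X) * OC t b (p+1) (\<sigma>'(p := True)) f"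
    proof -
      have pw: "PWs t (p+1) j (\<sigma>'(p := True)) = PWs t (p+1) j \<sigma>'" for j
        unfolding PWs_def by (rule prod.cong) auto
      have "OC t b (p+1) (\<sigma>'(p := True)) f = (\<Sum>j\<in>{p+1..<b}. if \<sigma>' j then fps_const (PWs t (p+1) j \<sigma>') * fps_X ^ nat (j - (p+1)) * CSet t (j+1) (\<sigma>'(p := True, j := False)) f else 0)"
        unfolding OC_def by (rule sum.cong) (auto simp: pw)
      also have "\<dots> = (\<Sum>j\<in>?J. fps_const (PWs t (p+1) j \<sigma>') * fps_X ^ nat (j - (p+1)) * CSet t (j+1) (\<sigma>'(p := True, j := False)) f)"
        by (rule sum.inter_filter[symmetric]) simp
      finally show ?thesis by (simp add: sum_distrib_left)
    qed
    finally show ?thesis .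
  qed
  show ?thesis
  proof (cases "\<sigma>' p")
    case True
    then show ?thesis unfolding CSet_def by (subst chw_split[OF b]) simp
  next
    case False
    then show ?thesis unfolding CSet_def
      by (subst chw_split[OF b], simp only: if_True not_False_eq_True, subst sum.union_disjoint)
         (use fin1 finS disj sumC2 in auto)
  qed
qed



lemma OC_split:
  assumes "p < b"
  shows "OC t b p \<sigma>' f = (if \<sigma>' p then CSet t (p+1) (\<sigma>'(p := False)) f else 0) + pass t (\<sigma>' p) * OC t b (p+1) \<sigma>' f"
proof -
  have I: "{p..<b} = insert p {p+1..<b}" using assms by auto
  have "OC t b p \<sigma>' f = (if \<sigma>' p then CSet t (p+1) (\<sigma>'(p := False)) f else 0)
     + (\<Sum>j\<in>{p+1..<b}. if \<sigma>' j then fps_const (PWs t p j \<sigma>') * fps_X ^ nat (j - p) * CSet t (j+1) (\<sigma>'(j := False)) f else 0)"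
    unfolding OC_def I by (subst sum.insert) (auto simp: PWs_def)
  also have "(\<Sum>j\<in>{p+1..<b}. if \<sigma>' j then fps_const (PWs t p j \<sigma>') * fps_X ^ nat (j - p) * CSet t (j+1) (\<sigma>'(j := False)) f else 0)
     = pass t (\<sigma>' p) * OC t b (p+1) \<sigma>' f"
    unfolding OC_def sum_distrib_left
  proof (rule sum.cong[OF refl])
    fix j assume j: "j \<in> {p+1..<b}"
    have pw: "PWs t p j \<sigma>' = (if \<sigma>' p then -1 else t) * PWs t (p+1) j \<sigma>'"
    proof -
      have "{p..<j} = insert p {p+1..<j}" using j by auto
      then show ?thesis unfolding PWs_def by simp
    qed
    have n: "nat (j - p) = Suc (nat (j - (p+1)))" using j by auto
    show "(if \<sigma>' j then fps_const (PWs t p j \<sigma>') * fps_X ^ nat (j - p) * CSet t (j+1) (\<sigma>'(j := False)) f else 0) =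
          pass t (\<sigma>' p) * (if \<sigma>' j then fps_const (PWs t (p+1) j \<sigma>') * fps_X ^ nat (j - (p+1)) * CSet t (j+1) (\<sigma>'(j := False)) f else 0)"
      unfolding pw n pass_def by (simp add: mult_ac flip: fps_const_mult)
  qed
  finally show ?thesis .
qed

lemma CSet_b:
  assumes "\<forall>k\<ge>b. \<not> \<sigma>' k"
  shows "CSet t b \<sigma>' f = f \<sigma>'"
proof -
  have "chw b \<sigma>' = {[]}"
  proof (rule set_eqI, rule iffI)
    fix ps assume ps: "ps \<in> chw b \<sigma>'"
    then have c: "chain_ok ps" "valid ps \<sigma>'" "\<forall>(i, j)\<in>set ps. b \<le> i" by (auto simp: chw_def)
    have u: "\<forall>(i, j)\<in>set ps. j < b" by (rule chain_upper[OF c(1,2) assms])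
    have "ps = []"
    proof (rule ccontr)
      assume "ps \<noteq> []"
      then obtain i j where "(i, j) \<in> set ps" by (cases ps) auto
      then show False using c(3) u chain_lt[OF c(1)] by fastforce
    qed
    then show "ps \<in> {[]}" by simp
  qed (simp add: chw_def)
  then show ?thesis by (simp add: CSet_def Wc_def)
qed

lemma S_main:
  assumes t: "t \<noteq> 0"
  shows "\<forall>p \<sigma>' f. p + int n = b \<longrightarrow> (\<forall>k\<ge>b. \<not> \<sigma>' k) \<longrightarrow>
          CSet t p \<sigma>' f = TS0 t n p \<sigma>' f \<and> OC t b p \<sigma>' f = TS1 t n p \<sigma>' f"
proof (induction n)
  case 0
  show ?case by (auto simp: TS_0 CSet_b OC_def)
next
  case (Suc n)
  show ?case
  proof (intro allI impI)
    fix p and \<sigma>' :: "int \<Rightarrow> bool" and f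
    assume pb: "p + int (Suc n) = b" and b: "\<forall>k\<ge>b. \<not> \<sigma>' k"
    have pb': "p + 1 + int n = b" and plt: "p < b" using pb by auto
    have b1: "\<forall>k\<ge>b. \<not> (\<sigma>'(p := True)) k" "\<forall>k\<ge>b. \<not> (\<sigma>'(p := False)) k" using b plt by auto
    have IH: "CSet t (p+1) \<sigma>'' f = TS0 t n (p+1) \<sigma>'' f \<and> OC t b (p+1) \<sigma>'' f = TS1 t n (p+1) \<sigma>'' f"
      if "\<forall>k\<ge>b. \<not> \<sigma>'' k" for \<sigma>''
      using Suc.IH[rule_format, OF pb'] that by simp
    show "CSet t p \<sigma>' f = TS0 t (Suc n) p \<sigma>' f \<and> OC t b p \<sigma>' f = TS1 t (Suc n) p \<sigma>' f"
    proof
      show "CSet t p \<sigma>' f = TS0 t (Suc n) p \<sigma>' f"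
        using IH[OF b] IH[OF b1(1)] unfolding CSet_split[OF b t, where p=p and f=f] TS0_Suc by (simp del: fun_upd_apply)
      show "OC t b p \<sigma>' f = TS1 t (Suc n) p \<sigma>' f"
        using IH[OF b] IH[OF b1(2)] unfolding OC_split[OF plt] TS1_Suc by (simp del: fun_upd_apply)
    qed
  qed
qed



lemma A_coeff_chw:
  assumes S: "Std a b \<sigma>'"
  shows "A_coeff t m v \<sigma>' = (\<Sum>ps\<in>chw a \<sigma>'. if dg ps = m then t ^ m * (coef t ps \<sigma>' * v (unmove ps \<sigma>')) else 0)"
proof -
  have lo: "\<forall>k<a. \<sigma>' k" and hi: "\<forall>k\<ge>b. \<not> \<sigma>' k" using S by (auto simp: Std_def)
  have "A_coeff t m v \<sigma>' = (\<Sum>ps\<in>chw a \<sigma>'. if chain_ok ps \<and> chain_deg ps = int m then t ^ m * E_prod t ps v \<sigma>' else 0)"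
    unfolding A_coeff_def
  proof (rule Sum_any.expand_superset[OF finite_chw[OF hi]])
    show "{ps. (if chain_ok ps \<and> chain_deg ps = int m then t ^ m * E_prod t ps v \<sigma>' else 0) \<noteq> 0} \<subseteq> chw a \<sigma>'"
    proof
      fix ps assume "ps \<in> {ps. (if chain_ok ps \<and> chain_deg ps = int m then t ^ m * E_prod t ps v \<sigma>' else 0) \<noteq> 0}"
      then have c: "chain_ok ps" and e: "E_prod t ps v \<sigma>' \<noteq> 0" by (auto split: if_splits)
      have va: "valid ps \<sigma>'" using e unfolding E_prod_eq[OF chain_lt[OF c]] by (auto split: if_splits)
      show "ps \<in> chw a \<sigma>'" using c va chain_lower[OF c va lo] by (simp add: chw_def)
    qed
  qed
  also have "\<dots> = (\<Sum>ps\<in>chw a \<sigma>'. if dg ps = m then t ^ m * (coef t ps \<sigma>' * v (unmove ps \<sigma>')) else 0)"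
  proof (rule sum.cong[OF refl])
    fix ps assume "ps \<in> chw a \<sigma>'"
    then have c: "chain_ok ps" and va: "valid ps \<sigma>'" by (auto simp: chw_def)
    show "(if chain_ok ps \<and> chain_deg ps = int m then t ^ m * E_prod t ps v \<sigma>' else 0) =
          (if dg ps = m then t ^ m * (coef t ps \<sigma>' * v (unmove ps \<sigma>')) else 0)"
      using c va by (simp add: chain_deg_dg E_prod_eq[OF chain_lt[OF c]])
  qed
  finally show ?thesis .
qed

lemma A_coeff_0: "A_coeff t 0 v \<sigma>' = v \<sigma>'"
proof -
  have "A_coeff t 0 v \<sigma>' = (\<Sum>ps\<in>{[]}. if chain_ok ps \<and> chain_deg ps = int 0 then t ^ 0 * E_prod t ps v \<sigma>' else 0)"
    unfolding A_coeff_def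
  proof (rule Sum_any.expand_superset)
    show "{ps. (if chain_ok ps \<and> chain_deg ps = int 0 then t ^ 0 * E_prod t ps v \<sigma>' else 0) \<noteq> 0} \<subseteq> {[]}"
    proof
      fix ps assume "ps \<in> {ps. (if chain_ok ps \<and> chain_deg ps = int 0 then t ^ 0 * E_prod t ps v \<sigma>' else 0) \<noteq> 0}"
      then have c: "chain_ok ps" and d: "chain_deg ps = 0" by (auto split: if_splits)
      have "dg ps = 0" using d chain_deg_dg[OF c] by simp
      then show "ps \<in> {[]}" using chain_lt[OF c] by (cases ps) auto
    qed
  qed simp
  then show ?thesis by (simp add: chain_deg_def E_prod_def)
qed

lemma sum_delta_diff:
  "(\<Sum>k\<le>N. if d = N - k then F k else 0) = (if d \<le> N then F (N - d) else (0::'b::comm_monoid_add))" for N :: nat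
proof (cases "d \<le> N")
  case True
  have "(\<Sum>k\<le>N. if d = N - k then F k else 0) = (\<Sum>k\<le>N. if k = N - d then F k else 0)"
  proof (rule sum.cong[OF refl])
    fix x assume "x \<in> {..N}"
    then have "(d = N - x) = (x = N - d)" using True by auto
    then show "(if d = N - x then F x else 0) = (if x = N - d then F x else 0)" by simp
  qed
  also have "\<dots> = F (N - d)" by (simp add: sum.delta)
  finally show ?thesis using True by simp
next
  case False
  then show ?thesis by (intro trans[OF sum.neutral]) auto
qed

lemma coeff_lemma:
  assumes S: "Std a b \<sigma>'"
  shows "(\<Sum>k\<le>N. A_coeff t (N - k) (\<lambda>\<tau>. fps_nth (G \<tau>) k) \<sigma>') = fps_nth (\<Sum>ps\<in>chw a \<sigma>'. Wc t ps \<sigma>' * G (unmove ps \<sigma>')) N"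
proof -
  have "(\<Sum>k\<le>N. A_coeff t (N - k) (\<lambda>\<tau>. fps_nth (G \<tau>) k) \<sigma>') =
     (\<Sum>k\<le>N. \<Sum>ps\<in>chw a \<sigma>'. if dg ps = N - k then t ^ (N - k) * (coef t ps \<sigma>' * fps_nth (G (unmove ps \<sigma>')) k) else 0)"
    by (simp add: A_coeff_chw[OF S])
  also have "\<dots> = (\<Sum>ps\<in>chw a \<sigma>'. \<Sum>k\<le>N. if dg ps = N - k then t ^ (N - k) * (coef t ps \<sigma>' * fps_nth (G (unmove ps \<sigma>')) k) else 0)"
    by (rule sum.swap)
  also have "\<dots> = (\<Sum>ps\<in>chw a \<sigma>'. fps_nth (Wc t ps \<sigma>' * G (unmove ps \<sigma>')) N)"
  proof (rule sum.cong[OF refl])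
    fix ps
    show "(\<Sum>k\<le>N. if dg ps = N - k then t ^ (N - k) * (coef t ps \<sigma>' * fps_nth (G (unmove ps \<sigma>')) k) else 0) =
          fps_nth (Wc t ps \<sigma>' * G (unmove ps \<sigma>')) N"
      unfolding sum_delta_diff Wc_def by (simp add: mult.assoc fps_X_power_mult_nth)
  qed
  also have "\<dots> = fps_nth (\<Sum>ps\<in>chw a \<sigma>'. Wc t ps \<sigma>' * G (unmove ps \<sigma>')) N"
    by (simp add: fps_sum_nth)
  finally show ?thesis .
qed



lemma is_maya_upd: "is_maya \<tau> \<Longrightarrow> is_maya (\<tau>(k := c))"
proof -
  assume "is_maya \<tau>"
  then obtain N where N: "\<forall>i. (i \<le> - N \<longrightarrow> \<tau> i) \<and> (N \<le> i \<longrightarrow> \<not> \<tau> i)" by (auto simp: is_maya_def)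
  define N' where "N' = max N (\<bar>k\<bar> + 1)"
  have "\<forall>i. (i \<le> - N' \<longrightarrow> (\<tau>(k := c)) i) \<and> (N' \<le> i \<longrightarrow> \<not> (\<tau>(k := c)) i)"
    using N unfolding N'_def by auto
  then show ?thesis unfolding is_maya_def by blast
qed

lemma is_maya_upd_iff: "is_maya (\<tau>(k := c)) \<longleftrightarrow> is_maya \<tau>"
  by (metis fun_upd_triv fun_upd_upd is_maya_upd)

lemma unmove_maya: "is_maya (unmove ps \<tau>) \<longleftrightarrow> is_maya \<tau>"
proof (induction ps arbitrary: \<tau>)
  case Nil then show ?case by simp
next
  case (Cons a r) then show ?case by (cases a) (simp add: is_maya_upd_iff del: fun_upd_apply)
qed

lemma maya_window:
  assumes "is_maya \<sigma>" "is_maya \<sigma>'"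
  shows "\<exists>a b. a \<le> b \<and> Std a b \<sigma> \<and> Std a b \<sigma>'"
proof -
  obtain N1 where N1: "\<forall>i. (i \<le> - N1 \<longrightarrow> \<sigma> i) \<and> (N1 \<le> i \<longrightarrow> \<not> \<sigma> i)" using assms(1) by (auto simp: is_maya_def)
  obtain N2 where N2: "\<forall>i. (i \<le> - N2 \<longrightarrow> \<sigma>' i) \<and> (N2 \<le> i \<longrightarrow> \<not> \<sigma>' i)" using assms(2) by (auto simp: is_maya_def)
  define N where "N = max (max N1 N2) 0"
  have "- N \<le> N \<and> Std (- N) N \<sigma> \<and> Std (- N) N \<sigma>'"
    using N1 N2 unfolding N_def Std_def by auto
  then show ?thesis by blast
qed

definition Tf :: "(int \<Rightarrow> bool) \<Rightarrow> (int \<Rightarrow> bool) \<Rightarrow> complex poly fract fps" where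
  "Tf \<sigma> \<tau> = Sum_any (\<lambda>h. if row_config \<sigma> \<tau> h
                   then Prod_any (\<lambda>i. Omega_cor (h (i - 1)) (\<sigma> i) (h i) (\<tau> i)) else 0)"

lemma Omega_cor_OmT: "Omega_cor = OmT t_var"
  by (simp add: Omega_cor_def OmT_def)

lemma Tf_RW':
  assumes "Std a b \<sigma>" "Std a b \<tau>" "a \<le> b"
  shows "Tf \<sigma> \<tau> = RW (OmT t_var) (nat (b - a)) a False \<sigma> \<tau>"
  unfolding Tf_def Omega_cor_OmT
  by (rule Tf_RW[OF _ _ _ assms]) (auto simp: OmT_def Omega_def intro: Omega_nz)

lemma Tf_nonmaya:
  assumes "is_maya \<sigma>" "\<not> is_maya \<tau>"
  shows "Tf \<sigma> \<tau> = 0"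
proof -
  have "\<not> row_config \<sigma> \<tau> h" for h
  proof
    assume rc: "row_config \<sigma> \<tau> h"
    then have fin: "finite {i. h i}" and al: "\<And>i. allowed_vertex (h (i-1)) (\<sigma> i) (h i) (\<tau> i)"
      by (auto simp: row_config_def)
    obtain K1 where K1: "\<forall>k\<le>K1. k \<notin> {i. h i}" using finite_int_lower[OF fin] by blast
    have "finite (uminus ` {i. h i})" using fin by simp
    then obtain K2 where K2: "\<forall>k\<le>K2. k \<notin> uminus ` {i. h i}" using finite_int_lower by blast
    have eq: "\<tau> i = \<sigma> i" if "i \<le> K1 \<or> - K2 + 1 \<le> i" for i
    proof -
      have "\<not> h (i-1) \<and> \<not> h i"
      proof (cases "i \<le> K1")
        case True then show ?thesis using K1 by auto
      next
        case False
        then have "- K2 + 1 \<le> i" using that by auto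
        then have "- i \<le> K2" "- (i - 1) \<le> K2" by auto
        then show ?thesis using K2 by (metis image_eqI mem_Collect_eq minus_minus)
      qed
      then show ?thesis using al[of i] allowed_WE by fastforce
    qed
    obtain N1 where N1: "\<forall>i. (i \<le> - N1 \<longrightarrow> \<sigma> i) \<and> (N1 \<le> i \<longrightarrow> \<not> \<sigma> i)" using assms(1) by (auto simp: is_maya_def)
    define N where "N = max N1 (max (- K1) (- K2 + 1))"
    have "\<forall>i. (i \<le> - N \<longrightarrow> \<tau> i) \<and> (N \<le> i \<longrightarrow> \<not> \<tau> i)"
      using N1 eq unfolding N_def by (metis max.bounded_iff minus_le_iff neg_le_iff_le)
    then show False using assms(2) by (auto simp: is_maya_def)
  qed
  then show ?thesis by (simp add: Tf_def)
qed

lemma RW_nth0: "fps_nth (RW (OmT t) n p False \<sigma> \<tau>) 0 = (if \<forall>k\<in>{p..<p+int n}. \<sigma> k = \<tau> k then 1 else 0)"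
proof (induction n arbitrary: p)
  case 0 then show ?case by simp
next
  case (Suc n)
  have eq: "(\<forall>k\<in>{p..<p+int(Suc n)}. \<sigma> k = \<tau> k) = (\<sigma> p = \<tau> p \<and> (\<forall>k\<in>{p+1..<p+1+int n}. \<sigma> k = \<tau> k))"
    unfolding Ico_Suc by auto
  show ?case unfolding eq using Suc.IH[of "p+1"]
    by (cases "\<sigma> p"; cases "\<tau> p") (simp_all add: OmT_def Omega_def fps_mult_nth_0)
qed

lemma t_var_nz: "t_var \<noteq> 0"
  by (simp add: t_var_def Zero_fract_def eq_fract)

lemma Std_eq: "Std a b \<sigma> \<Longrightarrow> Std a b \<tau> \<Longrightarrow> (\<forall>k\<in>{a..<b}. \<sigma> k = \<tau> k) \<longleftrightarrow> \<sigma> = \<tau>"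
  unfolding Std_def fun_eq_iff by (metis atLeastLessThan_iff linorder_not_le)

lemma unmove_Std:
  assumes S: "Std a b \<sigma>'" and ps: "ps \<in> chw a \<sigma>'"
  shows "Std a b (unmove ps \<sigma>')"
proof -
  have c: "chain_ok ps" "valid ps \<sigma>'" "\<forall>(i, j)\<in>set ps. a \<le> i" using ps by (auto simp: chw_def)
  have u: "\<forall>(i, j)\<in>set ps. j < b" by (rule chain_upper[OF c(1,2)]) (use S in \<open>auto simp: Std_def\<close>)
  have "unmove ps \<sigma>' k = \<sigma>' k" if "k < a \<or> b \<le> k" for k
    by (rule unmove_other) (use that c(3) u chain_lt[OF c(1)] in fastforce)
  then show ?thesis using S by (auto simp: Std_def)
qed

lemma key_sum:
  assumes S1: "Std a b \<sigma>" and S2: "Std a b \<sigma>'" and ab: "a \<le> b"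
  shows "(\<Sum>ps\<in>chw a \<sigma>'. Wc t_var ps \<sigma>' * Tf \<sigma> (unmove ps \<sigma>')) = (if \<sigma> = \<sigma>' then 1 else 0)"
proof -
  let ?n = "nat (b - a)"
  have hi: "\<forall>k\<ge>b. \<not> \<sigma>' k" using S2 by (auto simp: Std_def)
  have "(\<Sum>ps\<in>chw a \<sigma>'. Wc t_var ps \<sigma>' * Tf \<sigma> (unmove ps \<sigma>')) = CSet t_var a \<sigma>' (\<lambda>\<tau>. RW (OmT t_var) ?n a False \<sigma> \<tau>)"
    unfolding CSet_def by (rule sum.cong[OF refl]) (simp add: Tf_RW'[OF S1 unmove_Std[OF S2] ab])
  also have "\<dots> = TS0 t_var ?n a \<sigma>' (\<lambda>\<tau>. RW (OmT t_var) ?n a False \<sigma> \<tau>)"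
    using S_main[OF t_var_nz, of ?n b] ab hi by auto
  also have "\<dots> = PP t_var ?n a False False \<sigma> \<sigma>'"
    unfolding TS0_def PP_def by (simp add: mult.commute)
  also have "\<dots> = (if \<sigma> = \<sigma>' then 1 else 0)"
    using PP_main[of t_var ?n a \<sigma> \<sigma>'] Std_eq[OF S1 S2] ab by simp
  finally show ?thesis .
qed

lemma main_coeff:
  assumes sm: "is_maya \<sigma>"
  shows "Ainv_coeff t_var n (basis_vec \<sigma>) \<tau> = fps_nth (Tf \<sigma> \<tau>) n"
proof (induction n arbitrary: \<tau> rule: less_induct)
  case (less n)
  have IH: "Ainv_coeff t_var k (basis_vec \<sigma>) = (\<lambda>\<tau>. fps_nth (Tf \<sigma> \<tau>) k)" if "k < n" for k
    using less.IH[OF that] by (simp add: fun_eq_iff)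
  show ?case
  proof (cases "is_maya \<tau>")
    case False
    have Tz: "Tf \<sigma> \<tau> = 0" by (rule Tf_nonmaya[OF sm False])
    show ?thesis
    proof (cases n)
      case 0
      have "\<tau> \<noteq> \<sigma>" using False sm by auto
      then show ?thesis using 0 Tz by (simp add: basis_vec_def)
    next
      case (Suc m)
      have "A_coeff t_var m' (\<lambda>\<tau>. fps_nth (Tf \<sigma> \<tau>) k) \<tau> = 0" for k m'
      proof -
        have "(if chain_ok ps \<and> chain_deg ps = int m' then t_var ^ m' * E_prod t_var ps (\<lambda>\<tau>. fps_nth (Tf \<sigma> \<tau>) k) \<tau> else 0) = 0" for ps
        proof (cases "chain_ok ps")
          case True
          have "\<not> is_maya (unmove ps \<tau>)" using False unmove_maya by blast
          then have "Tf \<sigma> (unmove ps \<tau>) = 0" by (rule Tf_nonmaya[OF sm])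
          then show ?thesis using True by (simp add: E_prod_eq[OF chain_lt[OF True]])
        qed simp
        then show ?thesis unfolding A_coeff_def by simp
      qed
      then show ?thesis using Suc Tz IH by simp
    qed
  next
    case True
    obtain a b where ab: "a \<le> b" and S1: "Std a b \<sigma>" and S2: "Std a b \<tau>"
      using maya_window[OF sm True] by blast
    show ?thesis
    proof (cases n)
      case 0
      have "fps_nth (Tf \<sigma> \<tau>) 0 = (if \<sigma> = \<tau> then 1 else 0)"
        unfolding Tf_RW'[OF S1 S2 ab] RW_nth0 using Std_eq[OF S1 S2] ab by simp
      then show ?thesis using 0 by (auto simp: basis_vec_def)
    next
      case (Suc m)
      have key: "(\<Sum>k\<le>Suc m. A_coeff t_var (Suc m - k) (\<lambda>\<tau>. fps_nth (Tf \<sigma> \<tau>) k) \<tau>) = 0"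
        unfolding coeff_lemma[OF S2] key_sum[OF S1 S2 ab] by simp
      have E: "(\<Sum>k\<le>Suc m. A_coeff t_var (Suc m - k) (\<lambda>\<tau>. fps_nth (Tf \<sigma> \<tau>) k) \<tau>) =
            (\<Sum>k<Suc m. A_coeff t_var (Suc m - k) (\<lambda>\<tau>. fps_nth (Tf \<sigma> \<tau>) k) \<tau>) + fps_nth (Tf \<sigma> \<tau>) (Suc m)"
        by (simp add: lessThan_Suc_atMost[symmetric] A_coeff_0)
      have Z: "(\<Sum>k<Suc m. A_coeff t_var (Suc m - k) (\<lambda>\<tau>. fps_nth (Tf \<sigma> \<tau>) k) \<tau>) + fps_nth (Tf \<sigma> \<tau>) (Suc m) = 0"
        by (simp only: E[symmetric] key)
      have "fps_nth (Tf \<sigma> \<tau>) (Suc m) = - (\<Sum>k<Suc m. A_coeff t_var (Suc m - k) (\<lambda>\<tau>. fps_nth (Tf \<sigma> \<tau>) k) \<tau>)"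
        using Z[unfolded add_eq_0_iff] .
      also have "\<dots> = - (\<Sum>k<Suc m. A_coeff t_var (Suc m - k) (Ainv_coeff t_var k (basis_vec \<sigma>)) \<tau>)"
      proof (rule arg_cong[where f=uminus], rule sum.cong[OF refl])
        fix k assume "k \<in> {..<Suc m}"
        then have "k < n" using Suc by simp
        then show "A_coeff t_var (Suc m - k) (\<lambda>\<tau>. fps_nth (Tf \<sigma> \<tau>) k) \<tau> = A_coeff t_var (Suc m - k) (Ainv_coeff t_var k (basis_vec \<sigma>)) \<tau>"
          by (simp only: IH)
      qed
      also have "\<dots> = Ainv_coeff t_var (Suc m) (basis_vec \<sigma>) \<tau>" by (simp only: Ainv_coeff.simps)
      finally show ?thesis using Suc by simp
    qed
  qed
qed

theorem corollary4p10:
  fixes \<sigma> \<sigma>' :: "int \<Rightarrow> bool"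
  assumes "is_maya \<sigma>" and "is_maya \<sigma>'"
  shows "Ainv_matrix t_var \<sigma>' \<sigma> =
    Sum_any (\<lambda>h. if row_config \<sigma> \<sigma>' h
                   then Prod_any (\<lambda>i. Omega_cor (h (i - 1)) (\<sigma> i) (h i) (\<sigma>' i))
                   else 0)"
proof -
  have "Ainv_matrix t_var \<sigma>' \<sigma> = Tf \<sigma> \<sigma>'"
    unfolding Ainv_matrix_def by (rule fps_ext) (simp add: main_coeff[OF assms(1)])
  then show ?thesis by (simp add: Tf_def)
qed



end
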